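(* For all $d\ge1$, $\alpha>1$, positive weights $\boldsymbol\gamma=\{\gamma_u\}$ with $\gamma_\emptyset=1$, and $M\ge1$, $$\sum_{\mathbf h\notin\mathcal A_d(M)}\frac1{r(\mathbf h)}\le C_{2,d,\tau,\alpha,\boldsymbol\gamma}\,M^{-\frac{1-\tau}{\alpha\tau}}\qquad\text{for all }\tau\in(\tfrac1\alpha,1),$$ where $$C_{2,d,\tau,\alpha,\boldsymbol\gamma}:=\gamma_{\{1\}}^{\frac{\tau-1}{\alpha\tau}}\,\frac{\tau}{1-\tau}\Big(\sum_{u\subseteq\{1:d\}}\gamma_u^\tau[2\zeta(\alpha\tau)]^{|u|}\Big)^{1/\tau}.$$
   Context: $\{1:d\}=\{1,\ldots,d\}$; $\zeta$ is the Riemann zeta function. Weights $\gamma_u>0$ for finite $u\subset\mathbb N$, $\gamma_\emptyset=1$. For $\mathbf h\in\mathbb Z^d$, $\mathrm{supp}(\mathbf h)=\{j:h_j\ne0\}$, $r(\mathbf h)=\gamma_{\mathrm{supp}(\mathbf h)}^{-1}\prod_{j\in\mathrm{supp}(\mathbf h)}|h_j|^\alpha$, and $\mathcal A_d(M)=\{\mathbf h\in\mathbb Z^d:r(\mathbf h)\le M\}$. *)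

theory Defs
  imports "HOL-Analysis.Analysis"
begin

definition zeta :: "real \<Rightarrow> real" where
  "zeta s = (\<Sum>n. 1 / real (Suc n) powr s)"

text \<open>Integer vectors in Z^d, represented as functions nat => int vanishing outside {1..d}.\<close>
definition lattice :: "nat \<Rightarrow> (nat \<Rightarrow> int) set" where
  "lattice d = {h. \<forall>j. j \<notin> {1..d} \<longrightarrow> h j = 0}"

definition supp :: "nat \<Rightarrow> (nat \<Rightarrow> int) \<Rightarrow> nat set" where
  "supp d h = {j \<in> {1..d}. h j \<noteq> 0}"

definition rfun :: "nat \<Rightarrow> (nat set \<Rightarrow> real) \<Rightarrow> real \<Rightarrow> (nat \<Rightarrow> int) \<Rightarrow> real" where
  "rfun d \<gamma> \<alpha> h = (\<Prod>j\<in>supp d h. real_of_int \<bar>h j\<bar> powr \<alpha>) / \<gamma> (supp d h)"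

definition Aset :: "nat \<Rightarrow> (nat set \<Rightarrow> real) \<Rightarrow> real \<Rightarrow> real \<Rightarrow> (nat \<Rightarrow> int) set" where
  "Aset d \<gamma> \<alpha> M = {h \<in> lattice d. rfun d \<gamma> \<alpha> h \<le> M}"

definition C2 :: "nat \<Rightarrow> real \<Rightarrow> real \<Rightarrow> (nat set \<Rightarrow> real) \<Rightarrow> real" where
  "C2 d \<tau> \<alpha> \<gamma> = \<gamma> {1} powr ((\<tau> - 1) / (\<alpha> * \<tau>)) * (\<tau> / (1 - \<tau>)) *
     (\<Sum>u\<in>Pow {1..d}. \<gamma> u powr \<tau> * (2 * zeta (\<alpha> * \<tau>)) ^ card u) powr (1 / \<tau>)"

end

theory Submission
  imports Defs
begin



lemma step_ineq:
  fixes a p :: real assumes "a > 0" "p > 1"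
  shows "(a+1) powr (-p) \<le> (a powr (1-p) - (a+1) powr (1-p)) / (p-1)"
proof -
  have "\<And>x. a \<le> x \<Longrightarrow> x \<le> a+1 \<Longrightarrow> ((\<lambda>z. z powr (1-p)) has_real_derivative (1-p) * x powr (1-p-1)) (at x)"
    using assms by (intro has_real_derivative_powr) auto
  from MVT2[of a "a+1", OF _ this] obtain z where z: "a < z" "z < a+1"
    "(a+1) powr (1-p) - a powr (1-p) = (a+1-a) * ((1-p) * z powr (1-p-1))" by auto
  have "(a+1) powr (-p) \<le> z powr (-p)"
    using z assms by (intro powr_mono2') auto
  moreover have "a powr (1-p) - (a+1) powr (1-p) = (p-1) * z powr (-p)"
    using z by (simp add: algebra_simps)
  ultimately have "(p-1) * (a+1) powr (-p) \<le> a powr (1-p) - (a+1) powr (1-p)"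
    using assms by (metis diff_gt_0_iff_gt less_eq_real_def mult_left_mono)
  then show ?thesis using assms by (simp add: field_simps)
qed

lemma sum_bound:
  fixes K p :: real assumes "K > 0" "p > 1"
  shows "(\<Sum>j=1..m. (K + real j) powr (-p)) \<le> (K powr (1-p) - (K + real m) powr (1-p)) / (p-1)"
proof (induction m)
  case 0 then show ?case by simp
next
  case (Suc m)
  have e: "K + real (Suc m) = K + real m + 1" by simp
  have "(K + real (Suc m)) powr (-p) \<le> ((K + real m) powr (1-p) - (K + real (Suc m)) powr (1-p)) / (p-1)"
    unfolding e using step_ineq[of "K + real m" p] assms by simp
  moreover have "(\<Sum>j=1..Suc m. (K + real j) powr (-p)) = (\<Sum>j=1..m. (K + real j) powr (-p)) + (K + real (Suc m)) powr (-p)"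
    by simp
  ultimately show ?case using Suc by (simp add: diff_divide_distrib)
qed

lemma sum_bound2:
  fixes K p :: real assumes "K > 0" "p > 1"
  shows "(\<Sum>j=1..m. (K + real j) powr (-p)) \<le> K powr (1-p) / (p-1)"
proof -
  have "0 \<le> (K + real m) powr (1-p) / (p-1)" using assms by simp
  then show ?thesis using sum_bound[OF assms, of m] by (simp add: diff_divide_distrib)
qed


lemma zeta_summable: "s > 1 \<Longrightarrow> summable (\<lambda>n. 1 / real (Suc n) powr s)"
proof -
  assume s: "s > 1"
  have "summable (\<lambda>n. real n powr (-s))" using s summable_real_powr_iff by simp
  then have "summable (\<lambda>n. real (Suc n) powr (-s))"
    using summable_Suc_iff[of "\<lambda>n. real n powr (-s)"] by simp
  then show ?thesis by (simp add: powr_minus_divide)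
qed

lemma zeta_partial:
  assumes "s > 1" shows "(\<Sum>k=1..n. real k powr (-s)) \<le> zeta s"
proof -
  have "(\<Sum>k=1..n. real k powr (-s)) = (\<Sum>k<n. 1 / real (Suc k) powr s)"
    using sum.atLeast1_atMost_eq[of "\<lambda>k. real k powr (-s)" n] by (simp add: powr_minus_divide)
  also have "\<dots> \<le> zeta s" unfolding zeta_def
    using zeta_summable[OF assms] by (intro sum_le_suminf) auto
  finally show ?thesis .
qed

lemma rfun_pos:
  assumes "\<And>u. finite u \<Longrightarrow> \<gamma> u > 0"
  shows "rfun d \<gamma> \<alpha> h > 0"
proof -
  have "finite (supp d h)" unfolding supp_def by auto
  moreover have "\<And>j. j \<in> supp d h \<Longrightarrow> real_of_int \<bar>h j\<bar> powr \<alpha> > 0" unfolding supp_def by auto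
  ultimately show ?thesis unfolding rfun_def using assms by (simp add: prod_pos)
qed

lemma rfun_powr:
  assumes "\<And>u. finite u \<Longrightarrow> \<gamma> u > 0"
  shows "rfun d \<gamma> \<alpha> h powr (-\<tau>) = \<gamma> (supp d h) powr \<tau> * (\<Prod>j\<in>supp d h. real_of_int \<bar>h j\<bar> powr (-(\<alpha>*\<tau>)))"
proof -
  have fin: "finite (supp d h)" unfolding supp_def by auto
  have g: "\<gamma> (supp d h) > 0" using assms fin by auto
  have "rfun d \<gamma> \<alpha> h powr (-\<tau>) = (\<Prod>j\<in>supp d h. real_of_int \<bar>h j\<bar> powr \<alpha>) powr (-\<tau>) / \<gamma> (supp d h) powr (-\<tau>)"
    unfolding rfun_def using g by (simp add: powr_divide prod_nonneg)
  also have "(\<Prod>j\<in>supp d h. real_of_int \<bar>h j\<bar> powr \<alpha>) powr (-\<tau>) = (\<Prod>j\<in>supp d h. real_of_int \<bar>h j\<bar> powr (-(\<alpha>*\<tau>)))"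
    by (simp add: prod_powr_distrib powr_powr)
  finally show ?thesis using g by (simp add: powr_minus divide_inverse)
qed


lemma int_box_sum:
  assumes "s > 1"
  shows "(\<Sum>k\<in>{-int n..int n}-{0}. \<bar>real_of_int k\<bar> powr (-s)) = 2 * (\<Sum>k=1..n. real k powr (-s))"
proof -
  have eq: "{-int n..int n}-{0} = int ` {1..n} \<union> (\<lambda>k. - int k) ` {1..n}"
  proof (rule set_eqI, rule iffI)
    fix k assume k: "k \<in> {-int n..int n}-{0}"
    show "k \<in> int ` {1..n} \<union> (\<lambda>k. - int k) ` {1..n}"
    proof (cases "k > 0")
      case True then have "k = int (nat k)" by simp
      moreover have "nat k \<in> {1..n}" using k True by auto
      ultimately show ?thesis by blast
    next
      case False then have "k = - int (nat (-k))" by simp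
      moreover have "nat (-k) \<in> {1..n}" using k False by auto
      ultimately show ?thesis by blast
    qed
  next
    fix k assume "k \<in> int ` {1..n} \<union> (\<lambda>k. - int k) ` {1..n}"
    then show "k \<in> {-int n..int n}-{0}" by auto
  qed
  have disj: "int ` {1..n} \<inter> (\<lambda>k. - int k) ` {1..n} = {}" by auto
  have "(\<Sum>k\<in>{-int n..int n}-{0}. \<bar>real_of_int k\<bar> powr (-s))
      = (\<Sum>k\<in>int ` {1..n}. \<bar>real_of_int k\<bar> powr (-s)) + (\<Sum>k\<in>(\<lambda>k. - int k) ` {1..n}. \<bar>real_of_int k\<bar> powr (-s))"
    unfolding eq by (rule sum.union_disjoint) (use disj in auto)
  also have "(\<Sum>k\<in>int ` {1..n}. \<bar>real_of_int k\<bar> powr (-s)) = (\<Sum>k=1..n. real k powr (-s))"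
    by (subst sum.reindex) (auto simp: inj_on_def)
  also have "(\<Sum>k\<in>(\<lambda>k. - int k) ` {1..n}. \<bar>real_of_int k\<bar> powr (-s)) = (\<Sum>k=1..n. real k powr (-s))"
    by (subst sum.reindex) (auto simp: inj_on_def)
  finally show ?thesis by simp
qed

lemma zeta_nonneg: "s > 1 \<Longrightarrow> zeta s \<ge> 0"
  unfolding zeta_def by (rule suminf_nonneg[OF zeta_summable]) auto

lemma int_box_sum2:
  assumes "s > 1"
  shows "(\<Sum>k\<in>{-int n..int n}-{0}. \<bar>real_of_int k\<bar> powr (-s)) \<le> 2 * zeta s"
proof -
  have "(\<Sum>k=1..n. real k powr (-s)) \<le> zeta s" by (rule zeta_partial[OF assms])
  then show ?thesis unfolding int_box_sum[OF assms, of n] by linarith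
qed



lemma class_sum:
  assumes s: "s > 1" and G: "finite G" "G \<subseteq> lattice d" and su: "\<forall>h\<in>G. supp d h = u"
  shows "(\<Sum>h\<in>G. \<Prod>j\<in>u. \<bar>real_of_int (h j)\<bar> powr (-s)) \<le> (2*zeta s)^card u"
proof (cases "G = {}")
  case True then show ?thesis using zeta_nonneg[OF s] by simp
next
  case False
  then obtain h1 where "h1 \<in> G" by auto
  then have u: "u \<subseteq> {1..d}" using su unfolding supp_def by auto
  have finu: "finite u" using u finite_subset by blast
  define n where "n = Max ((\<lambda>(h,j). nat \<bar>h j\<bar>) ` (G \<times> {1..d}))"
  define B where "B = {-int n..int n}-{0}"
  have bnd: "\<bar>h j\<bar> \<le> int n" if "h \<in> G" "j \<in> {1..d}" for h j
  proof -
    have "nat \<bar>h j\<bar> \<le> n" unfolding n_def using that G by (intro Max_ge) force+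
    then show ?thesis by simp
  qed
  have inB: "h j \<in> B" if "h \<in> G" "j \<in> u" for h j
  proof -
    have "h j \<noteq> 0" using su that unfolding supp_def by auto
    moreover have "\<bar>h j\<bar> \<le> int n" using bnd that u by auto
    ultimately show ?thesis unfolding B_def by auto
  qed
  have zero: "h j = 0" if "h \<in> G" "j \<notin> u" for h j
  proof (cases "j \<in> {1..d}")
    case True then show ?thesis using su that unfolding supp_def by auto
  next
    case False then show ?thesis using G that unfolding lattice_def by auto
  qed
  have inj: "inj_on (\<lambda>h. restrict h u) G"
  proof (rule inj_onI)
    fix h h' assume hh: "h \<in> G" "h' \<in> G" "restrict h u = restrict h' u"
    show "h = h'"
    proof
      fix j show "h j = h' j"
      proof (cases "j \<in> u")
        case True then show ?thesis using hh by (metis restrict_apply')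
      next
        case False then show ?thesis using zero[OF hh(1) False] zero[OF hh(2) False] by simp
      qed
    qed
  qed
  have sub: "(\<lambda>h. restrict h u) ` G \<subseteq> PiE u (\<lambda>_. B)" using inB by auto
  have "(\<Sum>h\<in>G. \<Prod>j\<in>u. \<bar>real_of_int (h j)\<bar> powr (-s))
      = (\<Sum>g\<in>(\<lambda>h. restrict h u) ` G. \<Prod>j\<in>u. \<bar>real_of_int (g j)\<bar> powr (-s))"
    by (subst sum.reindex[OF inj]) (auto intro!: sum.cong prod.cong)
  also have "\<dots> \<le> (\<Sum>g\<in>PiE u (\<lambda>_. B). \<Prod>j\<in>u. \<bar>real_of_int (g j)\<bar> powr (-s))"
    using sub finu by (intro sum_mono2) (auto simp: B_def intro!: finite_PiE prod_nonneg)
  also have "\<dots> = (\<Prod>j\<in>u. \<Sum>k\<in>B. \<bar>real_of_int k\<bar> powr (-s))"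
    using finu by (subst prod_sum_PiE) (auto simp: B_def)
  also have "\<dots> \<le> (\<Prod>j\<in>u. 2 * zeta s)"
    using int_box_sum2[OF s] by (intro prod_mono) (auto simp: B_def intro: sum_nonneg)
  also have "\<dots> = (2*zeta s)^card u" by simp
  finally show ?thesis .
qed

lemma finite_S:
  assumes g: "\<And>u. finite u \<Longrightarrow> \<gamma> u > 0" and s: "\<alpha>*\<tau> > 1" and G: "finite G" "G \<subseteq> lattice d"
  shows "(\<Sum>h\<in>G. rfun d \<gamma> \<alpha> h powr (-\<tau>)) \<le> (\<Sum>u\<in>Pow {1..d}. \<gamma> u powr \<tau> * (2 * zeta (\<alpha> * \<tau>)) ^ card u)"
proof -
  have rp: "\<And>h. rfun d \<gamma> \<alpha> h powr (-\<tau>) = \<gamma> (supp d h) powr \<tau> * (\<Prod>j\<in>supp d h. real_of_int \<bar>h j\<bar> powr (-(\<alpha>*\<tau>)))"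
    by (rule rfun_powr[OF g])
  have "(\<Sum>h\<in>G. rfun d \<gamma> \<alpha> h powr (-\<tau>)) = (\<Sum>u\<in>Pow {1..d}. \<Sum>h\<in>{x\<in>G. supp d x = u}. rfun d \<gamma> \<alpha> h powr (-\<tau>))"
    by (rule sum.group[symmetric]) (use G in \<open>auto simp: supp_def\<close>)
  also have "\<dots> \<le> (\<Sum>u\<in>Pow {1..d}. \<gamma> u powr \<tau> * (2 * zeta (\<alpha> * \<tau>)) ^ card u)"
  proof (rule sum_mono)
    fix u assume "u \<in> Pow {1..d}"
    have "(\<Sum>h\<in>{x\<in>G. supp d x = u}. rfun d \<gamma> \<alpha> h powr (-\<tau>))
        = \<gamma> u powr \<tau> * (\<Sum>h\<in>{x\<in>G. supp d x = u}. \<Prod>j\<in>u. \<bar>real_of_int (h j)\<bar> powr (-(\<alpha>*\<tau>)))"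
      unfolding rp sum_distrib_left by (intro sum.cong) auto
    also have "\<dots> \<le> \<gamma> u powr \<tau> * (2 * zeta (\<alpha> * \<tau>)) ^ card u"
      using G by (intro mult_left_mono class_sum[OF s]) auto
    finally show "(\<Sum>h\<in>{x\<in>G. supp d x = u}. rfun d \<gamma> \<alpha> h powr (-\<tau>)) \<le> \<gamma> u powr \<tau> * (2 * zeta (\<alpha> * \<tau>)) ^ card u" .
  qed
  finally show ?thesis .
qed


lemma ranking:
  fixes r :: "'a \<Rightarrow> real"
  assumes rpos: "\<forall>h\<in>X. r h > 0" and L0: "finite L0" "L0 \<subseteq> X" "\<forall>h\<in>L0. r h \<le> M"
    and S: "\<And>G. finite G \<Longrightarrow> G \<subseteq> X \<Longrightarrow> (\<Sum>h\<in>G. r h powr (-\<tau>)) \<le> S"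
    and tau: "\<tau> > 0" and Spos: "S > 0"
  shows "finite F \<Longrightarrow> F \<subseteq> {h\<in>X. r h > M} \<Longrightarrow>
    (\<Sum>h\<in>F. 1 / r h) \<le> S powr (1/\<tau>) * (\<Sum>j=1..card F. (real (card L0) + real j) powr (-(1/\<tau>)))"
proof (induction "card F" arbitrary: F)
  case 0 then show ?case by simp
next
  case (Suc n)
  then have "F \<noteq> {}" by auto
  have "Max (r ` F) \<in> r ` F" using Suc \<open>F \<noteq> {}\<close> by (intro Max_in) auto
  then obtain h0 where h0: "h0 \<in> F" "r h0 = Max (r ` F)" by auto
  have h0max: "r h \<le> r h0" if "h \<in> F" for h using h0 that Suc by auto
  have "h0 \<in> X" using h0(1) Suc(4) by blast
  then have R: "r h0 > 0" using rpos by blast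
  define F' where "F' = F - {h0}"
  have cF': "card F' = n" using Suc h0 unfolding F'_def by simp
  have IH: "(\<Sum>h\<in>F'. 1 / r h) \<le> S powr (1/\<tau>) * (\<Sum>j=1..n. (real (card L0) + real j) powr (-(1/\<tau>)))"
    using Suc(1)[of F'] cF' Suc(3,4) unfolding F'_def by auto
  define N where "N = real (card L0) + real (Suc n)"
  have disj: "L0 \<inter> F = {}" using L0 Suc by force
  have "N = real (card (L0 \<union> F))" unfolding N_def using card_Un_disjoint[OF L0(1) Suc(3) disj] Suc(2) by simp
  also have "\<dots> = (\<Sum>h\<in>L0 \<union> F. 1)" by simp
  also have "\<dots> \<le> (\<Sum>h\<in>L0 \<union> F. r h0 powr \<tau> * r h powr (-\<tau>))"
  proof (rule sum_mono)
    fix h assume h: "h \<in> L0 \<union> F"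
    then have rh: "r h > 0" "r h \<le> r h0" using rpos L0 Suc h0max h0 by force+
    have "r h powr \<tau> \<le> r h0 powr \<tau>" using rh tau by (intro powr_mono2) auto
    then show "1 \<le> r h0 powr \<tau> * r h powr (-\<tau>)" using rh by (simp add: powr_minus field_simps)
  qed
  also have "\<dots> = r h0 powr \<tau> * (\<Sum>h\<in>L0 \<union> F. r h powr (-\<tau>))" by (simp add: sum_distrib_left)
  also have "\<dots> \<le> r h0 powr \<tau> * S" using S[of "L0 \<union> F"] L0 Suc by (intro mult_left_mono) auto
  finally have NS: "N \<le> r h0 powr \<tau> * S" .
  have Npos: "N > 0" unfolding N_def by simp
  have "N / S \<le> r h0 powr \<tau>" using NS Spos by (simp add: field_simps)
  then have "(N / S) powr (1/\<tau>) \<le> (r h0 powr \<tau>) powr (1/\<tau>)" using Npos Spos tau by (intro powr_mono2) auto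
  also have "\<dots> = r h0" using R tau by (simp add: powr_powr)
  finally have "N powr (1/\<tau>) / S powr (1/\<tau>) \<le> r h0" using Npos Spos by (simp add: powr_divide)
  then have key: "1 / r h0 \<le> S powr (1/\<tau>) * N powr (-(1/\<tau>))"
    using R Npos Spos by (simp add: powr_minus field_simps)
  have "(\<Sum>h\<in>F. 1 / r h) = 1 / r h0 + (\<Sum>h\<in>F'. 1 / r h)"
    unfolding F'_def using Suc h0 by (simp add: sum.remove)
  also have "\<dots> \<le> S powr (1/\<tau>) * N powr (-(1/\<tau>)) + S powr (1/\<tau>) * (\<Sum>j=1..n. (real (card L0) + real j) powr (-(1/\<tau>)))"
    using key IH by linarith
  also have "\<dots> = S powr (1/\<tau>) * (\<Sum>j=1..card F. (real (card L0) + real j) powr (-(1/\<tau>)))"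
    unfolding Suc(2)[symmetric] N_def by (simp add: algebra_simps)
  finally show ?case .
qed




theorem lemma6:
  fixes d :: nat and \<alpha> M \<tau> :: real and \<gamma> :: "nat set \<Rightarrow> real"
  assumes "d \<ge> 1" and "\<alpha> > 1"
    and "\<And>u. finite u \<Longrightarrow> \<gamma> u > 0" and "\<gamma> {} = 1"
    and "M \<ge> 1"
    and "1 / \<alpha> < \<tau>" and "\<tau> < 1"
  shows "(\<lambda>h. 1 / rfun d \<gamma> \<alpha> h) summable_on (lattice d - Aset d \<gamma> \<alpha> M)
    \<and> (\<Sum>\<^sub>\<infinity>h\<in>lattice d - Aset d \<gamma> \<alpha> M. 1 / rfun d \<gamma> \<alpha> h)
        \<le> C2 d \<tau> \<alpha> \<gamma> * M powr (- (1 - \<tau>) / (\<alpha> * \<tau>))"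
proof -
  note d = assms(1) and al = assms(2) and g = assms(3) and g0 = assms(4) and M = assms(5)
    and t1 = assms(6) and t2 = assms(7)
  define r where "r = rfun d \<gamma> \<alpha>"
  define S where "S = (\<Sum>u\<in>Pow {1..d}. \<gamma> u powr \<tau> * (2 * zeta (\<alpha> * \<tau>)) ^ card u)"
  define T where "T = lattice d - Aset d \<gamma> \<alpha> M"
  define p where "p = 1 / \<tau>"
  have "1 / \<alpha> > 0" using al by simp
  then have tpos: "\<tau> > 0" using t1 by linarith
  have "\<alpha> * (1 / \<alpha>) < \<alpha> * \<tau>" using t1 al by (intro mult_strict_left_mono) auto
  then have s: "\<alpha> * \<tau> > 1" using al by simp
  have p1: "p > 1" unfolding p_def using tpos t2 by simp
  have T: "T = {h \<in> lattice d. r h > M}" unfolding T_def Aset_def r_def by auto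
  have rpos: "\<forall>h\<in>lattice d. r h > 0"
  proof
    fix h show "r h > 0" unfolding r_def by (rule rfun_pos[OF g])
  qed
  have Sb: "(\<Sum>h\<in>G. r h powr (-\<tau>)) \<le> S" if "finite G" "G \<subseteq> lattice d" for G
    unfolding r_def S_def by (rule finite_S[OF g s that])
  have S1: "S \<ge> 1"
  proof -
    have zn: "zeta (\<alpha> * \<tau>) \<ge> 0" by (rule zeta_nonneg[OF s])
    have "\<forall>u\<in>Pow {1..d} - {{}}. 0 \<le> \<gamma> u powr \<tau> * (2 * zeta (\<alpha> * \<tau>)) ^ card u"
      using zn by simp
    then have "\<gamma> {} powr \<tau> * (2 * zeta (\<alpha> * \<tau>)) ^ card ({}::nat set) \<le> S"
      unfolding S_def using sum_nonneg_leq_bound[of "Pow {1..d}"] member_le_sum[of "{}" "Pow {1..d}" "\<lambda>u. \<gamma> u powr \<tau> * (2 * zeta (\<alpha> * \<tau>)) ^ card u"]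
      by auto
    then show ?thesis using g0 by simp
  qed
  define g1 where "g1 = \<gamma> {1}"
  have g1pos: "g1 > 0" unfolding g1_def using g by auto
  define x where "x = (M * g1) powr (1/\<alpha>)"
  have xpos: "x > 0" unfolding x_def using M g1pos by simp
  define m where "m = nat \<lfloor>x\<rfloor>"
  define e where "e = (\<lambda>k::nat. (\<lambda>j::nat. if j = 1 then int k else 0))"
  define L0 where "L0 = e ` {0..m}"
  have inje: "inj_on e {0..m}" unfolding e_def inj_on_def by (metis of_nat_eq_iff)
  have cardL0: "card L0 = m + 1" unfolding L0_def using card_image[OF inje] by simp
  have K: "real (card L0) \<ge> x" unfolding cardL0 m_def using xpos by linarith
  have L0lat: "L0 \<subseteq> lattice d" unfolding L0_def e_def lattice_def using d by auto
  have L0M: "\<forall>h\<in>L0. r h \<le> M"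
  proof
    fix h assume "h \<in> L0"
    then obtain k where k: "k \<in> {0..m}" "h = e k" unfolding L0_def by auto
    show "r h \<le> M"
    proof (cases "k = 0")
      case True
      then have "supp d h = {}" unfolding k e_def supp_def by auto
      then show ?thesis unfolding r_def rfun_def using g0 M by simp
    next
      case False
      then have sp: "supp d h = {1}" unfolding k e_def supp_def using d by auto
      have fx: "\<lfloor>x\<rfloor> \<ge> 0" using xpos by simp
      have ik: "int k \<le> \<lfloor>x\<rfloor>" using k(1) fx le_nat_iff unfolding m_def by auto
      have "real k \<le> real_of_int \<lfloor>x\<rfloor>" using ik by (metis of_int_le_iff of_int_of_nat_eq)
      moreover have "real_of_int \<lfloor>x\<rfloor> \<le> x" by (rule of_int_floor_le)
      ultimately have "real k \<le> x" by linarith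
      then have "real k powr \<alpha> \<le> x powr \<alpha>" using al by (intro powr_mono2) auto
      also have "\<dots> = M * g1" unfolding x_def using M g1pos al by (simp add: powr_powr)
      finally have "real k powr \<alpha> / g1 \<le> M" using g1pos by (simp add: field_simps)
      then show ?thesis unfolding r_def rfun_def sp g1_def using k by (simp add: e_def)
    qed
  qed
  define B0 where "B0 = S powr (1/\<tau>) * (x powr (1-p) / (p-1))"
  have fin: "(\<Sum>h\<in>F. 1 / r h) \<le> B0" if F: "finite F" "F \<subseteq> T" for F
  proof -
    have "(\<Sum>h\<in>F. 1 / r h) \<le> S powr (1/\<tau>) * (\<Sum>j=1..card F. (real (card L0) + real j) powr (-(1/\<tau>)))"
      using ranking[OF rpos _ L0lat L0M Sb tpos, of F] S1 F T
      using cardL0 by (auto simp: L0_def)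
    also have "\<dots> \<le> S powr (1/\<tau>) * (real (card L0) powr (1-p) / (p-1))"
      using sum_bound2[of "real (card L0)" p "card F"] K xpos p1 unfolding p_def
      by (intro mult_left_mono) auto
    also have "\<dots> \<le> B0" unfolding B0_def using K xpos p1
      by (intro mult_left_mono divide_right_mono powr_mono2') auto
    finally show ?thesis .
  qed
  have summ: "(\<lambda>h. 1 / r h) summable_on T"
  proof (rule nonneg_bdd_above_summable_on)
    show "\<And>h. h \<in> T \<Longrightarrow> 0 \<le> 1 / r h" using rpos T by (auto simp: less_imp_le)
    show "bdd_above (sum (\<lambda>h. 1 / r h) ` {F. F \<subseteq> T \<and> finite F})"
      using fin by (intro bdd_aboveI[of _ B0]) auto
  qed
  have inf: "(\<Sum>\<^sub>\<infinity>h\<in>T. 1 / r h) \<le> B0"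
    using summ fin by (intro infsum_le_finite_sums) auto
  have B0eq: "B0 = C2 d \<tau> \<alpha> \<gamma> * M powr (- (1 - \<tau>) / (\<alpha> * \<tau>))"
  proof -
    have e1: "(1 - p) / \<alpha> = - (1 - \<tau>) / (\<alpha> * \<tau>)" unfolding p_def using tpos al by (simp add: field_simps)
    have e2: "1 / (p - 1) = \<tau> / (1 - \<tau>)" unfolding p_def using tpos t2 by (simp add: field_simps)
    have e3: "(\<tau> - 1) / (\<alpha> * \<tau>) = - (1 - \<tau>) / (\<alpha> * \<tau>)" by (simp add: field_simps)
    have "x powr (1-p) = (M * g1) powr ((1-p)/\<alpha>)" unfolding x_def using M g1pos by (simp add: powr_powr)
    also have "\<dots> = M powr ((1-p)/\<alpha>) * g1 powr ((1-p)/\<alpha>)" by (simp add: powr_mult)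
    finally have "x powr (1-p) = M powr (- (1 - \<tau>) / (\<alpha> * \<tau>)) * g1 powr ((\<tau> - 1) / (\<alpha> * \<tau>))"
      unfolding e1 e3 .
    then show ?thesis unfolding B0_def C2_def S_def g1_def
      by (simp add: e2[symmetric] field_simps)
  qed
  show ?thesis using summ inf B0eq unfolding T_def r_def by simp
qed

end
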